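(* Consider an instance of the periodic lock scheduling problem with exactly two streams, one downstream with offset $\mu_D$ and periodicity $\lambda_D\ge2$, and one upstream with offset $\mu_U$ and periodicity $\lambda_U\ge2$. Let $\Lambda=\operatorname{lcm}(\lambda_D,\lambda_U)$. Then for any optimal schedule $\sigma$, $$C_{\mathrm{avg},\sigma}\ge\begin{cases}\frac1\Lambda & \text{if } \mu_U-\mu_D\equiv0\pmod{\gcd(\lambda_D,\lambda_U)},\\ 0&\text{otherwise.}\end{cases}$$
   Context: Periodic lock scheduling problem. Time is discrete, periods $t=1,2,\dots$. Each stream $i$ has a direction $\delta_i\in\{D,U\}$, an integer periodicity $\lambda_i\ge1$ and an integer offset $1\le\mu_i\le\lambda_i$; $a_i(t)=1$ if $t\equiv\mu_i\pmod{\lambda_i}$ and $0$ otherwise, $a_\delta(t)=\sum_{i:\delta_i=\delta}a_i(t)$. A schedule is a sequence $\sigma=(\sigma(t))_{t\ge1}$ with $\sigma(t)\in\{D,U,W\}$ ($D$: process downstream waiting vessels and switch alignment from downstream to upstream; $U$ symmetrically; $W$: wait); the initial orientation is arbitrary; it is feasible if the non-$W$ actions alternate between $D$ and $U$. Queue lengths: $n_D(0)=n_U(0)=0$ and for $t\ge1$, $n_\delta(t)=0$ if $\sigma(t)=\delta$ and $n_\delta(t)=n_\delta(t-1)+a_\delta(t)$ otherwise. $C_\sigma(t)=n_D(t)+n_U(t)$ and $C_{\mathrm{avg},\sigma}=\lim_{T\to\infty}\frac1T\sum_{t=1}^TC_\sigma(t)$. A schedule is optimal if it is feasible and minimizes $C_{\mathrm{avg},\sigma}$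 over all feasible schedules. *)

theory Defs
  imports Complex_Main
begin

datatype action = D | U | W

definition arr2 :: "nat \<Rightarrow> nat \<Rightarrow> nat \<Rightarrow> nat \<Rightarrow> action \<Rightarrow> nat \<Rightarrow> nat" where
  "arr2 lD mD lU mU \<delta> t =
     (case \<delta> of
        D \<Rightarrow> (if t mod lD = mD mod lD then 1 else 0)
      | U \<Rightarrow> (if t mod lU = mU mod lU then 1 else 0)
      | W \<Rightarrow> 0)"

text \<open>Queue lengths n_delta(t); sigma(0) is irrelevant (time starts at 1).\<close>
primrec queue :: "(action \<Rightarrow> nat \<Rightarrow> nat) \<Rightarrow> (nat \<Rightarrow> action) \<Rightarrow> action \<Rightarrow> nat \<Rightarrow> nat" where
  "queue a \<sigma> \<delta> 0 = 0"
| "queue a \<sigma> \<delta> (Suc t) = (if \<sigma> (Suc t) = \<delta> then 0 else queue a \<sigma> \<delta> t + a \<delta> (Suc t))"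

definition cost :: "(action \<Rightarrow> nat \<Rightarrow> nat) \<Rightarrow> (nat \<Rightarrow> action) \<Rightarrow> nat \<Rightarrow> nat" where
  "cost a \<sigma> t = queue a \<sigma> D t + queue a \<sigma> U t"

definition avg_seq :: "(action \<Rightarrow> nat \<Rightarrow> nat) \<Rightarrow> (nat \<Rightarrow> action) \<Rightarrow> nat \<Rightarrow> real" where
  "avg_seq a \<sigma> T = (\<Sum>t=1..T. real (cost a \<sigma> t)) / real T"

definition Cavg :: "(action \<Rightarrow> nat \<Rightarrow> nat) \<Rightarrow> (nat \<Rightarrow> action) \<Rightarrow> real" where
  "Cavg a \<sigma> = lim (avg_seq a \<sigma>)"

definition feasible :: "(nat \<Rightarrow> action) \<Rightarrow> bool" where
  "feasible \<sigma> \<longleftrightarrow> (\<forall>s t. 1 \<le> s \<and> s < t \<and> \<sigma> s \<noteq> W \<and> \<sigma> t \<noteq> W \<and> (\<forall>r. s < r \<and> r < t \<longrightarrow> \<sigma> r = W)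
                      \<longrightarrow> \<sigma> s \<noteq> \<sigma> t)"

definition optimal :: "(action \<Rightarrow> nat \<Rightarrow> nat) \<Rightarrow> (nat \<Rightarrow> action) \<Rightarrow> bool" where
  "optimal a \<sigma> \<longleftrightarrow> feasible \<sigma> \<and> convergent (avg_seq a \<sigma>) \<and>
     (\<forall>\<sigma>'. feasible \<sigma>' \<and> convergent (avg_seq a \<sigma>') \<longrightarrow> Cavg a \<sigma> \<le> Cavg a \<sigma>')"

end

theory Submission
  imports Defs
begin

lemma cost_ge1:
  assumes "arr2 lD mD lU mU D t = 1" "arr2 lD mD lU mU U t = 1" "t \<ge> 1"
  shows "cost (arr2 lD mD lU mU) \<sigma> t \<ge> 1"
proof -
  obtain t' where t: "t = Suc t'" using assms(3) by (cases t) auto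
  show ?thesis using assms unfolding cost_def t
    by (cases "\<sigma> (Suc t')") auto
qed

lemma crt_exists:
  fixes lD lU mD mU :: nat
  assumes "lD > 0" "lU > 0" "(int mU - int mD) mod int (gcd lD lU) = 0"
  shows "\<exists>x::nat. 1 \<le> x \<and> x \<le> lcm lD lU \<and> x mod lD = mD mod lD \<and> x mod lU = mU mod lU"
proof -
  let ?g = "int (gcd lD lU)"
  obtain c where c: "int mU - int mD = ?g * c"
    using assms(3) by (metis dvd_def mod_0_imp_dvd)
  obtain a b where ab: "a * int lD + b * int lU = ?g"
    by (metis bezout_int gcd_int_int_eq)
  define T0 where "T0 = int mD + c * a * int lD"
  have T0': "T0 = int mU - c * b * int lU"
  proof -
    have "int mU = int mD + ?g * c" using c by simp
    also have "\<dots> = int mD + (a * int lD + b * int lU) * c" by (simp add: ab)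
    finally show ?thesis unfolding T0_def by (simp add: algebra_simps)
  qed
  have h1: "T0 mod int lD = int mD mod int lD" unfolding T0_def by simp
  have h2: "T0 mod int lU = int mU mod int lU" proof -
    have "T0 = int mU + (- (c * b)) * int lU" unfolding T0' by simp
    then show ?thesis by (metis mod_mult_self1)
  qed
  define L where "L = lcm lD lU"
  have Lpos: "L > 0" using assms unfolding L_def by (simp add: lcm_pos_nat)
  define x0 where "x0 = nat (T0 mod int L)"
  have dD: "int lD dvd int L" and dU: "int lU dvd int L" unfolding L_def by auto
  have x0D: "int x0 mod int lD = T0 mod int lD" unfolding x0_def using Lpos dD
    by (simp add: mod_mod_cancel)
  have x0U: "int x0 mod int lU = T0 mod int lU" unfolding x0_def using Lpos dU
    by (simp add: mod_mod_cancel)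
  have x0L: "x0 < L" unfolding x0_def using Lpos by (simp add: nat_less_iff)
  define x where "x = (if x0 = 0 then L else x0)"
  have "x mod lD = mD mod lD"
  proof -
    have "int (x0 mod lD) = int (mD mod lD)" by (simp add: of_nat_mod x0D h1)
    then have "x0 mod lD = mD mod lD" by simp
    moreover have "L mod lD = 0" unfolding L_def by simp
    ultimately show ?thesis unfolding x_def by auto
  qed
  moreover have "x mod lU = mU mod lU"
  proof -
    have "int (x0 mod lU) = int (mU mod lU)" by (simp add: of_nat_mod x0U h2)
    then have "x0 mod lU = mU mod lU" by simp
    moreover have "L mod lU = 0" unfolding L_def by simp
    ultimately show ?thesis unfolding x_def by auto
  qed
  moreover have "1 \<le> x" "x \<le> L" using x0L Lpos unfolding x_def by auto
  ultimately show ?thesis unfolding L_def by blast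
qed

lemma avg_nonneg: "avg_seq a \<sigma> T \<ge> 0"
  unfolding avg_seq_def by (simp add: sum_nonneg)

theorem lemma8:
  fixes lD mD lU mU :: nat and \<sigma> :: "nat \<Rightarrow> action"
  assumes "lD \<ge> 2" and "lU \<ge> 2"
    and "1 \<le> mD" and "mD \<le> lD" and "1 \<le> mU" and "mU \<le> lU"
    and "optimal (arr2 lD mD lU mU) \<sigma>"
  shows "Cavg (arr2 lD mD lU mU) \<sigma> \<ge>
           (if (int mU - int mD) mod int (gcd lD lU) = 0 then 1 / real (lcm lD lU) else 0)"
proof -
  let ?a = "arr2 lD mD lU mU"
  have conv: "convergent (avg_seq ?a \<sigma>)" using assms(7) unfolding optimal_def by blast
  then have lim: "avg_seq ?a \<sigma> \<longlonglongrightarrow> Cavg ?a \<sigma>"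
    unfolding Cavg_def by (simp add: convergent_LIMSEQ_iff)
  show ?thesis
  proof (cases "(int mU - int mD) mod int (gcd lD lU) = 0")
    case False
    have "0 \<le> Cavg ?a \<sigma>" by (rule LIMSEQ_le_const[OF lim]) (auto simp: avg_nonneg)
    then show ?thesis using False by simp
  next
    case True
    define L where "L = lcm lD lU"
    have Lpos: "L > 0" using assms unfolding L_def by (simp add: lcm_pos_nat)
    obtain x where x: "1 \<le> x" "x \<le> L" "x mod lD = mD mod lD" "x mod lU = mU mod lU"
      using crt_exists[OF _ _ True] assms unfolding L_def by auto
    have bound: "avg_seq ?a \<sigma> (L * Suc k) \<ge> 1 / real L" for k
    proof -
      define S where "S = (\<lambda>j. x + L * j) ` {..<Suc k}"
      have inj: "inj_on (\<lambda>j. x + L * j) {..<Suc k}" using Lpos by (auto simp: inj_on_def)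
      have cardS: "card S = Suc k" unfolding S_def using card_image[OF inj] by simp
      have sub: "S \<subseteq> {1..L * Suc k}"
      proof
        fix t assume "t \<in> S"
        then obtain j where j: "j < Suc k" "t = x + L * j" unfolding S_def by auto
        have "L * Suc j \<le> L * Suc k" using j(1) by (intro mult_le_mono2) simp
        then have f: "L * j + L \<le> L * Suc k" by simp
        have "x + L * j \<le> L * Suc k" using f x(2) by linarith
        then show "t \<in> {1..L * Suc k}" using j x by auto
      qed
      have c1: "cost ?a \<sigma> t \<ge> 1" if "t \<in> S" for t
      proof -
        obtain j where j: "t = x + L * j" using \<open>t \<in> S\<close> unfolding S_def by auto
        obtain q1 where q1: "L = lD * q1" unfolding L_def by (meson dvd_def dvd_lcm1)
        obtain q2 where q2: "L = lU * q2" unfolding L_def by (meson dvd_def dvd_lcm2)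
        have "t = x + (q1 * j) * lD" using j q1 by (simp add: algebra_simps)
        then have e1: "t mod lD = mD mod lD" using x(3) by simp
        have "t = x + (q2 * j) * lU" using j q2 by (simp add: algebra_simps)
        then have e2: "t mod lU = mU mod lU" using x(4) by simp
        note e = e1 e2
        have "t \<ge> 1" using j x by simp
        then show ?thesis by (intro cost_ge1) (use e in \<open>auto simp: arr2_def\<close>)
      qed
      have "real (Suc k) = (\<Sum>t\<in>S. 1::real)" using cardS by simp
      also have "\<dots> \<le> (\<Sum>t\<in>S. real (cost ?a \<sigma> t))" using c1 by (intro sum_mono) auto
      also have "\<dots> \<le> (\<Sum>t=1..L * Suc k. real (cost ?a \<sigma> t))"
        by (rule sum_mono2[OF _ sub]) auto
      finally have "real (Suc k) \<le> (\<Sum>t=1..L * Suc k. real (cost ?a \<sigma> t))" .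
      then have "real (Suc k) / real (L * Suc k) \<le> avg_seq ?a \<sigma> (L * Suc k)"
        unfolding avg_seq_def using Lpos by (intro divide_right_mono) auto
      moreover have "real (Suc k) / real (L * Suc k) = 1 / real L"
      proof -
        have p1: "real L > 0" using Lpos by simp
        have p2: "real (Suc k) > 0" by simp
        have "real (L * Suc k) = real L * real (Suc k)" by (simp only: of_nat_mult)
        then show ?thesis using p1 p2 by (simp only:) (rule nonzero_divide_mult_cancel_right, simp)
      qed
      ultimately show ?thesis by simp
    qed
    have sm: "strict_mono (\<lambda>k. L * Suc k)" using Lpos by (auto simp: strict_mono_def)
    have "(\<lambda>k. avg_seq ?a \<sigma> (L * Suc k)) \<longlonglongrightarrow> Cavg ?a \<sigma>"
      using LIMSEQ_subseq_LIMSEQ[OF lim sm] by (simp add: o_def)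
    then have "1 / real L \<le> Cavg ?a \<sigma>" by (rule LIMSEQ_le_const) (use bound in auto)
    then show ?thesis using True unfolding L_def by simp
  qed
qed

end
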